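(* Let $G$ be a connected bipartite graph with color classes $E$ (emerald) and $V$ (violet), and fix a triangulation $\mathscr T$ of the root polytope $Q_G$. Let $\Sigma$ be a cycle-free subgraph of $G$ (with vertex set $E\cup V$) such that the corresponding simplex $\sigma\subset Q_G$ is an interior face of $\mathscr T$, and let $C$ be a connected component of $\Sigma$. Then there is a unique maximal simplex of $\mathscr T$ containing $\sigma$ such that in the corresponding spanning tree $\Gamma_C\supset\Sigma$, every edge of $\Gamma_C\setminus\Sigma$ has its violet endpoint facing $C$.
   Context: $Q_G\subset\mathbf R^E\oplus\mathbf R^V$ is the convex hull of $\mathbf i_{\{e\}}+\mathbf i_{\{v\}}$ over edges $ev$ of $G$. The simplex corresponding to a cycle-free set of edges is the convex hull of the corresponding vertices of $Q_G$ (these are affinely independent exactly when the edge set is cycle-free); maximal simplices correspond to spanning trees. A triangulation is a collection of full-dimensional such simplices pairwise meeting in common faces with union $Q_G$; its faces are the faces of these simplices, and a face is interior if it is not contained in the boundary of $Q_G$. For a tree $\Gamma$ containing a connected subgraph $C$ and an edge $\varepsilon\in\Gamma\setminus C$, the endpoint of $\varepsilon$ closer to $C$ in $\Gamma$ is said to face $C$. *)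

theory Defs
  imports "HOL-Analysis.Analysis"
begin

text \<open>Bipartite graphs with colour classes E = UNIV :: 'e set (emerald) and
 V = UNIV :: 'v set (violet); an edge set is a set of pairs (e,v).
 Vertices of the graph are of type 'e + 'v (Inl e emerald, Inr v violet).\<close>

definition badj :: "('e \<times> 'v) set \<Rightarrow> ('e + 'v) \<Rightarrow> ('e + 'v) \<Rightarrow> bool" where
  "badj F x y \<longleftrightarrow> (\<exists>e v. (e, v) \<in> F \<and>
      ((x = Inl e \<and> y = Inr v) \<or> (x = Inr v \<and> y = Inl e)))"

definition breach :: "('e \<times> 'v) set \<Rightarrow> ('e + 'v) \<Rightarrow> ('e + 'v) \<Rightarrow> bool" where
  "breach F = (badj F)\<^sup>*\<^sup>*"

definition bconnected :: "('e \<times> 'v) set \<Rightarrow> bool" where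
  "bconnected F \<longleftrightarrow> (\<forall>x y. breach F x y)"

text \<open>Cycle-free: no edge lies on a cycle, i.e. removing any edge disconnects its endpoints.\<close>
definition cycle_free :: "('e \<times> 'v) set \<Rightarrow> bool" where
  "cycle_free F \<longleftrightarrow> (\<forall>e v. (e, v) \<in> F \<longrightarrow> \<not> breach (F - {(e, v)}) (Inl e) (Inr v))"

definition spanning_tree :: "('e \<times> 'v) set \<Rightarrow> ('e \<times> 'v) set \<Rightarrow> bool" where
  "spanning_tree G T \<longleftrightarrow> T \<subseteq> G \<and> cycle_free T \<and> bconnected T"

definition components :: "('e \<times> 'v) set \<Rightarrow> ('e + 'v) set set" where
  "components F = {{y. breach F x y} | x. True}"

definition walk :: "('e \<times> 'v) set \<Rightarrow> ('e + 'v) list \<Rightarrow> bool" where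
  "walk F xs \<longleftrightarrow> xs \<noteq> [] \<and> (\<forall>i. Suc i < length xs \<longrightarrow> badj F (xs ! i) (xs ! Suc i))"

definition gdist :: "('e \<times> 'v) set \<Rightarrow> ('e + 'v) \<Rightarrow> ('e + 'v) set \<Rightarrow> nat" where
  "gdist F x W = (LEAST n. \<exists>xs. walk F xs \<and> hd xs = x \<and> last xs \<in> W \<and> length xs = Suc n)"

text \<open>In the tree Gamma, the violet endpoint of the edge (e,v) faces the subgraph with vertex set W:
  it is strictly closer to W than the emerald endpoint.\<close>
definition violet_faces :: "('e \<times> 'v) set \<Rightarrow> ('e + 'v) set \<Rightarrow> 'e \<Rightarrow> 'v \<Rightarrow> bool" where
  "violet_faces \<Gamma> W e v \<longleftrightarrow> gdist \<Gamma> (Inr v) W < gdist \<Gamma> (Inl e) W"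

definition rpt :: "('e::finite \<times> 'v::finite) \<Rightarrow> real ^ ('e + 'v)" where
  "rpt ev = (\<chi> i. if i = Inl (fst ev) \<or> i = Inr (snd ev) then 1 else 0)"

definition root_polytope :: "('e::finite \<times> 'v::finite) set \<Rightarrow> (real ^ ('e + 'v)) set" where
  "root_polytope G = convex hull (rpt ` G)"

definition simplex_of :: "('e::finite \<times> 'v::finite) set \<Rightarrow> (real ^ ('e + 'v)) set" where
  "simplex_of F = convex hull (rpt ` F)"

text \<open>A triangulation: a set of spanning trees (maximal simplices) whose simplices pairwise
 meet in common faces and cover Q_G.\<close>
definition triangulation :: "('e::finite \<times> 'v::finite) set \<Rightarrow> ('e \<times> 'v) set set \<Rightarrow> bool" where
  "triangulation G \<T> \<longleftrightarrow>
     (\<forall>\<Gamma>\<in>\<T>. spanning_tree G \<Gamma>) \<and>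
     (\<forall>\<Gamma>1\<in>\<T>. \<forall>\<Gamma>2\<in>\<T>. (simplex_of \<Gamma>1 \<inter> simplex_of \<Gamma>2) face_of simplex_of \<Gamma>1 \<and>
                           (simplex_of \<Gamma>1 \<inter> simplex_of \<Gamma>2) face_of simplex_of \<Gamma>2) \<and>
     (\<Union>\<Gamma>\<in>\<T>. simplex_of \<Gamma>) = root_polytope G"

definition face_of_triang :: "('e::finite \<times> 'v::finite) set set \<Rightarrow> (real ^ ('e + 'v)) set \<Rightarrow> bool" where
  "face_of_triang \<T> S \<longleftrightarrow> (\<exists>\<Gamma>\<in>\<T>. S face_of simplex_of \<Gamma>)"

definition interior_face :: "('e::finite \<times> 'v::finite) set \<Rightarrow> ('e \<times> 'v) set set \<Rightarrow> (real ^ ('e + 'v)) set \<Rightarrow> bool" where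
  "interior_face G \<T> S \<longleftrightarrow> face_of_triang \<T> S \<and>
     \<not> S \<subseteq> root_polytope G - rel_interior (root_polytope G)"

end

theory Submission
  imports Defs
begin


definition sg :: "('e + 'v) \<Rightarrow> real" where
  "sg u = (case u of Inl _ \<Rightarrow> 1 | Inr _ \<Rightarrow> -1)"

definition wK :: "('e::finite + 'v::finite) set \<Rightarrow> real ^ ('e + 'v)" where
  "wK K = (\<chi> u. if u \<in> K then sg u else 0)"

definition ax :: "('e::finite + 'v::finite) \<Rightarrow> real ^ ('e + 'v)" where
  "ax u = axis u 1"

lemma sg_sq[simp]: "sg u * sg u = 1"
  by (cases u) (auto simp: sg_def)

lemma rpt_ax: "rpt (e, v) = ax (Inl e) + ax (Inr v)"
  by (auto simp: rpt_def ax_def vec_eq_iff axis_def)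

lemma wK_ax: "wK K \<bullet> ax u = (if u \<in> K then sg u else 0)"
  by (simp add: ax_def inner_axis wK_def)

lemma wK_rpt: "wK K \<bullet> rpt (e, v) = (if Inl e \<in> K then 1 else 0) - (if Inr v \<in> K then 1 else 0)"
  by (simp add: rpt_ax inner_add_right wK_ax sg_def)

lemma rpt_inj: "inj rpt"
proof
  fix a b :: "'e::finite \<times> 'v::finite"
  assume h: "rpt a = rpt b"
  have "rpt a $ Inl (fst a) = 1" "rpt a $ Inr (snd a) = 1" by (auto simp: rpt_def)
  then have "rpt b $ Inl (fst a) = 1" "rpt b $ Inr (snd a) = 1" using h by auto
  then show "a = b" by (auto simp: rpt_def split: if_splits simp: prod_eq_iff)
qed

lemma badj_sym: "badj F x y \<Longrightarrow> badj F y x"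
  by (auto simp: badj_def)

lemma breach_sym: "breach F x y \<Longrightarrow> breach F y x"
  unfolding breach_def
  by (induction rule: rtranclp_induct) (auto intro: converse_rtranclp_into_rtranclp badj_sym)

lemma breach_mono: assumes "F \<subseteq> F'" "breach F x y" shows "breach F' x y"
  using assms(2) unfolding breach_def
proof (induction rule: rtranclp_induct)
  case (step y z)
  then show ?case using assms(1) by (metis (no_types, lifting) badj_def rtranclp.rtrancl_into_rtrancl subsetD)
qed simp

lemma badj_rpt: "badj F y z \<Longrightarrow> ax y + ax z \<in> rpt ` F"
  unfolding badj_def by (auto simp: rpt_ax add.commute intro!: image_eqI[where f=rpt])

lemma breach_span:
  assumes "breach F x y"
  shows "ax x - (sg x * sg y) *\<^sub>R ax y \<in> span (rpt ` F)"
  using assms unfolding breach_def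
proof (induction rule: rtranclp_induct)
  case base
  then show ?case by (simp add: span_zero)
next
  case (step y z)
  have sgz: "sg z = - sg y" using step(2) by (auto simp: badj_def sg_def)
  have "ax y + ax z \<in> span (rpt ` F)" using badj_rpt[OF step(2)] by (simp add: span_base)
  then have "(ax x - (sg x * sg y) *\<^sub>R ax y) + (sg x * sg y) *\<^sub>R (ax y + ax z) \<in> span (rpt ` F)"
    by (rule span_add[OF step(3) span_scale])
  also have "(ax x - (sg x * sg y) *\<^sub>R ax y) + (sg x * sg y) *\<^sub>R (ax y + ax z)
      = ax x - (sg x * sg z) *\<^sub>R ax z"
    by (simp add: sgz scaleR_add_right algebra_simps)
  finally show ?case .
qed

lemma span_conn:
  fixes F :: "('e::finite \<times> 'v::finite) set"
  assumes "bconnected F" and "wK UNIV \<bullet> y = 0"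
  shows "y \<in> span (rpt ` F)"
proof -
  define e0 :: "'e + 'v" where "e0 = Inl undefined"
  have sg0: "sg e0 = 1" by (simp add: e0_def sg_def)
  have mem: "ax u - sg u *\<^sub>R ax e0 \<in> span (rpt ` F)" for u
  proof -
    have "ax e0 - (sg e0 * sg u) *\<^sub>R ax u \<in> span (rpt ` F)"
      using assms(1) breach_span unfolding bconnected_def by blast
    then have "(- sg u) *\<^sub>R (ax e0 - (sg e0 * sg u) *\<^sub>R ax u) \<in> span (rpt ` F)"
      by (rule span_scale)
    also have "(- sg u) *\<^sub>R (ax e0 - (sg e0 * sg u) *\<^sub>R ax u) = ax u - sg u *\<^sub>R ax e0"
      by (simp add: sg0 algebra_simps)
    finally show ?thesis .
  qed
  have y: "y = (\<Sum>u\<in>UNIV. (y $ u) *\<^sub>R ax u)"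
    using basis_expansion[of y] by (simp add: ax_def scalar_mult_eq_scaleR)
  have s: "(\<Sum>u\<in>UNIV. (y $ u * sg u)) = 0"
    using assms(2) by (simp add: inner_vec_def wK_def mult.commute)
  have "(\<Sum>u\<in>UNIV. (y $ u) *\<^sub>R ax u) = (\<Sum>u\<in>UNIV. (y $ u) *\<^sub>R (ax u - sg u *\<^sub>R ax e0))
        + (\<Sum>u\<in>UNIV. (y $ u * sg u)) *\<^sub>R ax e0"
    by (simp add: scaleR_diff_right sum_subtractf scaleR_sum_left)
  also have "\<dots> = (\<Sum>u\<in>UNIV. (y $ u) *\<^sub>R (ax u - sg u *\<^sub>R ax e0))" using s by simp
  finally have "y = (\<Sum>u\<in>UNIV. (y $ u) *\<^sub>R (ax u - sg u *\<^sub>R ax e0))" using y by simp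
  also have "\<dots> \<in> span (rpt ` F)"
    by (intro span_sum span_scale mem)
  finally show ?thesis .
qed

lemma wK_UNIV_rpt: "wK UNIV \<bullet> rpt a = 0"
  by (cases a) (simp add: wK_rpt)

lemma wKl_rpt: "wK (range Inl) \<bullet> rpt a = 1"
  by (cases a) (auto simp: wK_rpt)

lemma span_repr:
  fixes F :: "('e::finite \<times> 'v::finite) set"
  assumes "bconnected F" and "wK UNIV \<bullet> y = 0"
  shows "\<exists>c. y = (\<Sum>a\<in>F. c a *\<^sub>R rpt a)"
proof -
  have "y \<in> span (rpt ` F)" using span_conn[OF assms] .
  then obtain u where "y = (\<Sum>v\<in>rpt ` F. u v *\<^sub>R v)"
    using span_finite[of "rpt ` F"] by auto
  also have "\<dots> = (\<Sum>a\<in>F. u (rpt a) *\<^sub>R rpt a)"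
    by (subst sum.reindex) (auto intro: inj_on_subset[OF rpt_inj])
  finally show ?thesis by (intro exI[of _ "\<lambda>a. u (rpt a)"])
qed

lemma wK_sum: "wK K \<bullet> (\<Sum>a\<in>I. c a *\<^sub>R f a) = (\<Sum>a\<in>I. c a * (wK K \<bullet> f a))"
  by (simp add: inner_sum_right)



definition side :: "('e \<times> 'v) set \<Rightarrow> 'e \<Rightarrow> 'v \<Rightarrow> ('e + 'v) set" where
  "side \<Gamma> e v = {y. breach (\<Gamma> - {(e, v)}) (Inl e) y}"

lemma breach_trans: "breach F x y \<Longrightarrow> breach F y z \<Longrightarrow> breach F x z"
  unfolding breach_def by simp

lemma breach_step: "breach F x y \<Longrightarrow> badj F y z \<Longrightarrow> breach F x z"
  unfolding breach_def by simp

lemma side_l: "Inl e \<in> side \<Gamma> e v"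
  by (simp add: side_def breach_def)

lemma side_r: "cycle_free \<Gamma> \<Longrightarrow> (e, v) \<in> \<Gamma> \<Longrightarrow> Inr v \<notin> side \<Gamma> e v"
  by (simp add: side_def cycle_free_def)

lemma side_closed:
  assumes "(e', v') \<in> \<Gamma>" "(e', v') \<noteq> (e, v)"
  shows "Inl e' \<in> side \<Gamma> e v \<longleftrightarrow> Inr v' \<in> side \<Gamma> e v"
proof -
  have a: "badj (\<Gamma> - {(e, v)}) (Inl e') (Inr v')" using assms by (auto simp: badj_def)
  show ?thesis unfolding side_def
    using breach_step[OF _ a] breach_step[OF _ badj_sym[OF a]] by auto
qed

lemma side_cross:
  assumes "badj \<Gamma> x y" "x \<notin> side \<Gamma> e v" "y \<in> side \<Gamma> e v"
  shows "x = Inr v \<and> y = Inl e"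
proof -
  obtain e' v' where ev: "(e', v') \<in> \<Gamma>" "(x = Inl e' \<and> y = Inr v') \<or> (x = Inr v' \<and> y = Inl e')"
    using assms(1) by (auto simp: badj_def)
  show ?thesis
  proof (cases "(e', v') = (e, v)")
    case True
    then show ?thesis using ev assms(2,3) side_l[of e \<Gamma> v] by auto
  next
    case False
    then show ?thesis using side_closed[OF ev(1) False] ev(2) assms(2,3) by auto
  qed
qed

lemma side_cross2:
  assumes "badj \<Gamma> x y" "x \<in> side \<Gamma> e v" "y \<notin> side \<Gamma> e v"
  shows "x = Inl e \<and> y = Inr v"
  using side_cross[OF badj_sym[OF assms(1)] assms(3,2)] by auto

lemma wK_side_rpt:
  assumes "cycle_free \<Gamma>" "(e, v) \<in> \<Gamma>" "a \<in> \<Gamma>"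
  shows "wK (side \<Gamma> e v) \<bullet> rpt a = (if a = (e, v) then 1 else 0)"
proof (cases a)
  case (Pair e' v')
  then show ?thesis using side_closed[of e' v' \<Gamma> e v] assms side_l[of e \<Gamma> v] side_r[OF assms(1,2)]
    by (auto simp: wK_rpt)
qed

lemma coeff_side:
  assumes "cycle_free \<Gamma>" "(e, v) \<in> \<Gamma>" "I \<subseteq> \<Gamma>" "finite I"
  shows "wK (side \<Gamma> e v) \<bullet> (\<Sum>a\<in>I. c a *\<^sub>R rpt a) = (if (e, v) \<in> I then c (e, v) else 0)"
proof -
  have "wK (side \<Gamma> e v) \<bullet> (\<Sum>a\<in>I. c a *\<^sub>R rpt a) = (\<Sum>a\<in>I. c a * (if a = (e, v) then 1 else 0))"
    unfolding wK_sum
  proof (rule sum.cong[OF refl])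
    fix a assume "a \<in> I"
    then show "c a * (wK (side \<Gamma> e v) \<bullet> rpt a) = c a * (if a = (e, v) then 1 else 0)"
    proof -
      have "a \<in> \<Gamma>" using \<open>a \<in> I\<close> assms(3) by blast
      then show ?thesis using wK_side_rpt[OF assms(1,2)] by presburger
    qed
  qed
  also have "\<dots> = (if (e, v) \<in> I then c (e, v) else 0)"
    using assms(4) by (simp add: if_distrib sum.delta' cong: if_cong)
  finally show ?thesis .
qed

lemma comp_side:
  assumes "\<Sigma> \<subseteq> \<Gamma> - {(e, v)}" "w \<in> W" "w \<in> side \<Gamma> e v" "W = {y. breach \<Sigma> x0 y}"
  shows "W \<subseteq> side \<Gamma> e v"
proof
  fix w' assume "w' \<in> W"
  then have "breach \<Sigma> w w'" using assms breach_sym breach_trans by blast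
  then have "breach (\<Gamma> - {(e, v)}) w w'" using breach_mono assms(1) by blast
  then show "w' \<in> side \<Gamma> e v" using assms(3) unfolding side_def using breach_trans by blast
qed

lemma walk_cons: "walk F xs \<Longrightarrow> badj F x (hd xs) \<Longrightarrow> walk F (x # xs)"
  unfolding walk_def by (auto simp: nth_Cons hd_conv_nth split: nat.splits)

lemma breach_walk:
  assumes "breach F x y"
  shows "\<exists>xs. walk F xs \<and> hd xs = x \<and> last xs = y"
  using assms unfolding breach_def
proof (induction rule: converse_rtranclp_induct)
  case base
  then show ?case by (intro exI[of _ "[y]"]) (auto simp: walk_def)
next
  case (step x z)
  then obtain xs where "walk F xs" "hd xs = z" "last xs = y" by blast
  then show ?case using step(1) walk_cons
    by (intro exI[of _ "x # xs"]) (auto simp: walk_def)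
qed

lemma walk_drop: "walk F xs \<Longrightarrow> i < length xs \<Longrightarrow> walk F (drop i xs)"
  unfolding walk_def by auto

lemma gdist_less:
  assumes conn: "bconnected \<Gamma>"
    and cross: "\<And>x y. badj \<Gamma> x y \<Longrightarrow> x \<notin> K \<Longrightarrow> y \<in> K \<Longrightarrow> y = a"
    and "b \<notin> K" "W \<subseteq> K" "w \<in> W"
  shows "gdist \<Gamma> a W < gdist \<Gamma> b W"
proof -
  let ?P = "\<lambda>x n. \<exists>xs. walk \<Gamma> xs \<and> hd xs = x \<and> last xs \<in> W \<and> length xs = Suc n"
  obtain xs0 where "walk \<Gamma> xs0" "hd xs0 = b" "last xs0 = w"
    using breach_walk conn unfolding bconnected_def by blast
  then have ex: "?P b (length xs0 - 1)" using assms(5)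
    by (intro exI[of _ xs0]) (auto simp: walk_def)
  define n where "n = gdist \<Gamma> b W"
  have "?P b n" unfolding n_def gdist_def by (rule LeastI[of "?P b", OF ex])
  then obtain xs where xs: "walk \<Gamma> xs" "hd xs = b" "last xs \<in> W" "length xs = Suc n" by blast
  have ne: "xs \<noteq> []" using xs(1) by (simp add: walk_def)
  have exK: "\<exists>i. i < length xs \<and> xs ! i \<in> K"
    using xs(3,4) assms(4) ne by (intro exI[of _ "length xs - 1"]) (auto simp: last_conv_nth)
  define i where "i = (LEAST i. i < length xs \<and> xs ! i \<in> K)"
  have i: "i < length xs" "xs ! i \<in> K" using LeastI_ex[OF exK] unfolding i_def by auto
  have i0: "i \<noteq> 0"
  proof
    assume "i = 0"
    then have "xs ! 0 \<in> K" using i by simp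
    moreover have "xs ! 0 = b" using xs(2) ne by (simp add: hd_conv_nth)
    ultimately show False using assms(3) by simp
  qed
  have prev: "xs ! (i - 1) \<notin> K"
  proof
    assume "xs ! (i - 1) \<in> K"
    moreover have "i - 1 < length xs" using i by simp
    ultimately have "i \<le> i - 1" unfolding i_def by (intro Least_le) simp
    then show False using i0 by simp
  qed
  have "badj \<Gamma> (xs ! (i - 1)) (xs ! Suc (i - 1))" using xs(1) i i0 unfolding walk_def
    by (metis One_nat_def Suc_pred bot_nat_0.not_eq_extremum)
  then have "xs ! i = a" using cross prev i i0 by simp
  then have "?P a (n - i)" using xs i walk_drop[OF xs(1) i(1)]
    by (intro exI[of _ "drop i xs"]) (auto simp: hd_drop_conv_nth last_drop)
  then have "gdist \<Gamma> a W \<le> n - i" unfolding gdist_def by (rule Least_le)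
  then show ?thesis using i0 i xs(4) unfolding n_def by simp
qed



lemma simplex_explicit:
  fixes F :: "('e::finite \<times> 'v::finite) set"
  shows "y \<in> simplex_of F \<longleftrightarrow> (\<exists>\<mu>. (\<forall>a\<in>F. 0 \<le> \<mu> a) \<and> sum \<mu> F = 1 \<and> y = (\<Sum>a\<in>F. \<mu> a *\<^sub>R rpt a))"
proof -
  have inj: "inj_on rpt F" by (rule inj_on_subset[OF rpt_inj]) simp
  show ?thesis
  proof
    assume "y \<in> simplex_of F"
    then obtain u where u: "\<forall>x\<in>rpt ` F. 0 \<le> u x" "sum u (rpt ` F) = 1" "(\<Sum>x\<in>rpt ` F. u x *\<^sub>R x) = y"
      unfolding simplex_of_def by (auto simp: convex_hull_finite)
    show "\<exists>\<mu>. (\<forall>a\<in>F. 0 \<le> \<mu> a) \<and> sum \<mu> F = 1 \<and> y = (\<Sum>a\<in>F. \<mu> a *\<^sub>R rpt a)"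
      using u inj by (intro exI[of _ "\<lambda>a. u (rpt a)"]) (auto simp: sum.reindex)
  next
    assume "\<exists>\<mu>. (\<forall>a\<in>F. 0 \<le> \<mu> a) \<and> sum \<mu> F = 1 \<and> y = (\<Sum>a\<in>F. \<mu> a *\<^sub>R rpt a)"
    then obtain \<mu> where m: "\<forall>a\<in>F. 0 \<le> \<mu> a" "sum \<mu> F = 1" "y = (\<Sum>a\<in>F. \<mu> a *\<^sub>R rpt a)" by blast
    show "y \<in> simplex_of F" unfolding simplex_of_def m(3)
      by (rule convex_sum) (use m in \<open>auto intro: hull_inc\<close>)
  qed
qed

lemma rpt_inner: "rpt (e, v) \<bullet> rpt (e', v') = (if e = e' then 1 else 0) + (if v = v' then 1 else 0)"
  by (simp add: rpt_ax inner_add_left inner_add_right ax_def inner_axis_axis)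

lemma vertex_in:
  fixes F :: "('e::finite \<times> 'v::finite) set"
  assumes "rpt a \<in> simplex_of F"
  shows "a \<in> F"
proof (rule ccontr)
  assume nF: "a \<notin> F"
  obtain \<mu> where m: "\<forall>b\<in>F. 0 \<le> \<mu> b" "sum \<mu> F = 1" "rpt a = (\<Sum>b\<in>F. \<mu> b *\<^sub>R rpt b)"
    using assms simplex_explicit by blast
  obtain e v where a: "a = (e, v)" by (cases a)
  have le1: "rpt a \<bullet> rpt b \<le> 1" if "b \<in> F" for b
    using that nF a by (cases b) (auto simp: rpt_inner)
  have "2 = rpt a \<bullet> rpt a" by (simp add: a rpt_inner)
  also have "\<dots> = (\<Sum>b\<in>F. \<mu> b * (rpt a \<bullet> rpt b))"
    by (subst (2) m(3)) (simp add: inner_sum_right)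
  also have "\<dots> \<le> (\<Sum>b\<in>F. \<mu> b * 1)"
    by (intro sum_mono mult_left_mono) (use m le1 in auto)
  also have "\<dots> = 1" using m(2) by simp
  finally show False by simp
qed

lemma face_pos_comb:
  fixes a :: "'i \<Rightarrow> 'a::real_vector"
  assumes "T face_of S" "convex S" "finite I" "\<And>i. i \<in> I \<Longrightarrow> a i \<in> S"
    "\<And>i. i \<in> I \<Longrightarrow> w i > 0" "sum w I = 1" "(\<Sum>i\<in>I. w i *\<^sub>R a i) \<in> T" "i \<in> I"
  shows "a i \<in> T"
proof -
  let ?x = "(\<Sum>i\<in>I. w i *\<^sub>R a i)"
  have split: "?x = w i *\<^sub>R a i + (\<Sum>j\<in>I - {i}. w j *\<^sub>R a j)"
    using assms(3,8) by (simp add: sum.remove)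
  have sw: "sum w (I - {i}) = 1 - w i" using assms(3,6,8) by (simp add: sum_diff1)
  show ?thesis
  proof (cases "I - {i} = {}")
    case True
    then have "?x = w i *\<^sub>R a i" using split by (simp only: sum.empty add_0_right)
    moreover have "w i = 1" using sw True by simp
    ultimately show ?thesis using assms(7) by simp
  next
    case False
    have pos: "sum w (I - {i}) > 0"
      using False assms(3,5) by (intro sum_pos) auto
    then have wi: "w i < 1" using sw by simp
    define r where "r = (\<Sum>j\<in>I - {i}. (w j / (1 - w i)) *\<^sub>R a j)"
    have rS: "r \<in> S" unfolding r_def
    proof (rule convex_sum)
      show "(\<Sum>j\<in>I - {i}. w j / (1 - w i)) = 1"
        using sw wi by (simp add: sum_divide_distrib[symmetric])
    qed (use assms wi in \<open>auto intro: less_imp_le\<close>)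
    have xr: "?x = (1 - (1 - w i)) *\<^sub>R a i + (1 - w i) *\<^sub>R r"
      unfolding split r_def using wi by (simp add: scaleR_sum_right)
    show ?thesis
    proof (cases "a i = r")
      case True
      then have "?x = a i" using xr by (simp add: algebra_simps)
      then show ?thesis using assms(7) by simp
    next
      case False
      have "?x \<in> open_segment (a i) r"
        unfolding in_segment using False wi assms(5,8) xr
        by (intro conjI exI[of _ "1 - w i"]) auto
      then show ?thesis using face_ofD[OF assms(1) _ assms(4)[OF assms(8)] rS assms(7)] by blast
    qed
  qed
qed



lemma Q_nonneg:
  fixes G :: "('e::finite \<times> 'v::finite) set"
  assumes "y \<in> simplex_of G"
  shows "ax u \<bullet> y \<ge> 0"
proof -
  obtain \<mu> where m: "\<forall>a\<in>G. 0 \<le> \<mu> a" "y = (\<Sum>a\<in>G. \<mu> a *\<^sub>R rpt a)"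
    using assms simplex_explicit by blast
  have "ax u \<bullet> rpt a \<ge> 0" for a
    by (cases a) (simp add: rpt_ax inner_add_right ax_def inner_axis_axis)
  then show ?thesis unfolding m(2) inner_sum_right
    using m(1) by (intro sum_nonneg) auto
qed

lemma noiso:
  fixes G \<Sigma> :: "('e::finite \<times> 'v::finite) set"
  assumes conn: "bconnected G" and sub: "\<Sigma> \<subseteq> G"
    and z: "z \<in> simplex_of \<Sigma>" "z \<in> rel_interior (root_polytope G)"
  shows "\<exists>e v. (e, v) \<in> \<Sigma> \<and> (u = Inl e \<or> u = Inr v)"
proof (rule ccontr)
  assume nex: "\<not> ?thesis"
  obtain \<mu> where m: "z = (\<Sum>a\<in>\<Sigma>. \<mu> a *\<^sub>R rpt a)"
    using z(1) simplex_explicit by blast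
  have "ax u \<bullet> rpt a = 0" if "a \<in> \<Sigma>" for a
    using that nex by (cases a) (auto simp: rpt_ax inner_add_right ax_def inner_axis_axis)
  then have z0: "ax u \<bullet> z = 0" unfolding m inner_sum_right by simp
  define u' :: "'e + 'v" where "u' = (case u of Inl _ \<Rightarrow> Inr undefined | Inr _ \<Rightarrow> Inl undefined)"
  have "u \<noteq> u'" by (cases u) (auto simp: u'_def)
  moreover have "breach G u u'" using conn by (simp add: bconnected_def)
  ultimately obtain y where "badj G u y" unfolding breach_def
    by (metis converse_rtranclpE)
  then obtain e v where ev: "(e, v) \<in> G" "u = Inl e \<or> u = Inr v" by (auto simp: badj_def)
  have one: "ax u \<bullet> rpt (e, v) = 1"
    using ev(2) by (auto simp: rpt_ax inner_add_right ax_def inner_axis_axis)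
  have inQ: "rpt (e, v) \<in> root_polytope G" unfolding root_polytope_def
    using ev(1) by (intro hull_inc) auto
  have "rpt (e, v) \<in> affine hull (root_polytope G)" using inQ by (rule hull_inc)
  moreover have "rpt (e, v) \<noteq> z" using one z0 by auto
  ultimately obtain m where mm: "m > 1" "\<forall>s. s > 1 \<and> s \<le> m \<longrightarrow> (1 - s) *\<^sub>R rpt (e, v) + s *\<^sub>R z \<in> root_polytope G"
    using convex_rel_interior_if[OF _ z(2)] unfolding root_polytope_def
    by (metis convex_convex_hull)
  then have "(1 - m) *\<^sub>R rpt (e, v) + m *\<^sub>R z \<in> simplex_of G"
    by (auto simp: root_polytope_def simplex_of_def)
  then have "ax u \<bullet> ((1 - m) *\<^sub>R rpt (e, v) + m *\<^sub>R z) \<ge> 0" by (rule Q_nonneg)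
  then show False using one z0 mm(1) by (simp add: inner_add_right)
qed



definition dvec :: "('e::finite + 'v::finite) set \<Rightarrow> ('e + 'v \<Rightarrow> 'e + 'v) \<Rightarrow> real ^ ('e + 'v)" where
  "dvec W base = (\<Sum>u\<in>-W. sg u *\<^sub>R (ax u - ax (base u)))"

lemma dvec_L:
  assumes "\<And>u. sg (base u) = sg u"
  shows "wK K \<bullet> dvec W base = (\<Sum>u\<in>-W. (if u \<in> K then 1 else 0) - (if base u \<in> K then 1 else 0))"
  unfolding dvec_def inner_sum_right
proof (rule sum.cong[OF refl])
  fix u
  show "wK K \<bullet> (sg u *\<^sub>R (ax u - ax (base u))) = (if u \<in> K then 1 else 0) - (if base u \<in> K then 1 else 0)"
    using assms[of u] by (simp add: inner_diff_right wK_ax right_diff_distrib)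
qed

lemma dvec_pos:
  assumes "\<And>u. sg (base u) = sg u" "\<And>u. base u \<in> W" "K \<inter> W = {}" "k \<in> K"
  shows "wK K \<bullet> dvec W base \<ge> 1"
proof -
  have "wK K \<bullet> dvec W base = (\<Sum>u\<in>-W. (if u \<in> K then 1 else 0))"
    unfolding dvec_L[OF assms(1)] using assms(2,3) by (intro sum.cong) auto
  also have "\<dots> \<ge> (if k \<in> K then 1 else 0)"
    using assms(3,4) by (intro member_le_sum) auto
  finally show ?thesis using assms(4) by simp
qed

lemma dvec_neg:
  assumes "\<And>u. sg (base u) = sg u" "\<And>u. base u \<in> W" "W \<subseteq> K" "k \<notin> K"
  shows "wK K \<bullet> dvec W base \<le> -1"
proof -
  have "wK K \<bullet> dvec W base = - (\<Sum>u\<in>-W. (if u \<in> K then 0 else 1))"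
    unfolding dvec_L[OF assms(1)] using assms(2,3)
    by (simp add: sum_negf[symmetric]) (intro sum.cong; auto)
  also have "(\<Sum>u\<in>-W. (if u \<in> K then 0 else 1)) \<ge> (if k \<in> K then 0 else (1::real))"
    using assms(3,4) by (intro member_le_sum) auto
  then have "- (\<Sum>u\<in>-W. (if u \<in> K then 0 else 1)) \<le> (-1::real)" using assms(4) by simp
  finally show ?thesis .
qed

lemma dvec_bound:
  assumes "\<And>u. sg (base u) = sg u"
  shows "\<bar>wK K \<bullet> (dvec W base :: real ^ ('e::finite + 'v::finite))\<bar> \<le> real CARD('e + 'v)"
proof -
  have "\<bar>wK K \<bullet> (dvec W base :: real ^ ('e + 'v))\<bar>
     \<le> (\<Sum>u\<in>-W. \<bar>(if u \<in> K then 1 else 0) - (if base u \<in> K then 1 else (0::real))\<bar>)"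
    unfolding dvec_L[OF assms] by (rule sum_abs)
  also have "\<dots> \<le> of_nat (card (-W)) * 1"
    by (rule sum_bounded_above) auto
  also have "\<dots> \<le> real CARD('e + 'v)"
  proof -
    have "card (-W) \<le> CARD('e + 'v)" by (rule card_mono) auto
    then show ?thesis by (metis of_nat_mono mult_1_right)
  qed
  finally show ?thesis .
qed

lemma dvec_UNIV:
  assumes "\<And>u. sg (base u) = sg u"
  shows "wK UNIV \<bullet> dvec W base = 0"
  unfolding dvec_L[OF assms] by simp

lemma dvec_Inl:
  assumes "\<And>u. sg (base u) = sg u" "\<And>u. base u \<in> range Inl \<longleftrightarrow> u \<in> range Inl"
  shows "wK (range Inl) \<bullet> dvec W base = 0"
  unfolding dvec_L[OF assms(1)] using assms(2) by (intro sum.neutral) auto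



lemma aux_lt:
  fixes m x :: real assumes "0 < m" "0 \<le> x" shows "m / (2 * (x + 1)) * x < m"
proof -
  have eq: "m / (2 * (x + 1)) * x = m * (x / (2 * (x + 1)))" by simp
  have "x / (2 * (x + 1)) < 1" using assms by (simp add: divide_less_eq)
  then have "m * (x / (2 * (x + 1))) < m * 1" using assms(1) by (rule mult_strict_left_mono)
  then show ?thesis using eq by simp
qed

theorem lemma4p1:
  fixes G \<Sigma> :: "('e::finite \<times> 'v::finite) set"
    and \<T> :: "('e \<times> 'v) set set"
    and W :: "('e + 'v) set"
  assumes "bconnected G"
    and "triangulation G \<T>"
    and "\<Sigma> \<subseteq> G" and "cycle_free \<Sigma>"
    and "interior_face G \<T> (simplex_of \<Sigma>)"
    and "W \<in> components \<Sigma>"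
  shows "\<exists>!\<Gamma>. \<Gamma> \<in> \<T> \<and> \<Sigma> \<subseteq> \<Gamma> \<and>
           (\<forall>e v. (e, v) \<in> \<Gamma> - \<Sigma> \<longrightarrow> violet_faces \<Gamma> W e v)"
proof -
  note conn = assms(1)
  have trees: "\<And>\<Gamma>. \<Gamma> \<in> \<T> \<Longrightarrow> spanning_tree G \<Gamma>" using assms(2) by (simp add: triangulation_def)
  have faces: "\<And>\<Gamma>1 \<Gamma>2. \<Gamma>1 \<in> \<T> \<Longrightarrow> \<Gamma>2 \<in> \<T> \<Longrightarrow> (simplex_of \<Gamma>1 \<inter> simplex_of \<Gamma>2) face_of simplex_of \<Gamma>1"
    using assms(2) unfolding triangulation_def by blast
  have cover: "(\<Union>\<Gamma>\<in>\<T>. simplex_of \<Gamma>) = root_polytope G"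
    using assms(2) unfolding triangulation_def by blast
  have finT: "finite \<T>"
  proof (rule finite_subset)
    show "\<T> \<subseteq> Pow G" using trees by (auto simp: spanning_tree_def)
  qed simp
  have sQ: "simplex_of \<Sigma> \<subseteq> root_polytope G" unfolding simplex_of_def root_polytope_def
    by (rule hull_mono) (use assms(3) in auto)
  obtain z where z: "z \<in> simplex_of \<Sigma>" "z \<in> rel_interior (root_polytope G)"
    using assms(5) sQ unfolding interior_face_def by blast
  obtain \<Gamma>0 where \<Gamma>0: "\<Gamma>0 \<in> \<T>" "simplex_of \<Sigma> face_of simplex_of \<Gamma>0"
    using assms(5) unfolding interior_face_def face_of_triang_def by blast
  have \<Sigma>ne: "\<Sigma> \<noteq> {}" using z(1) by (auto simp: simplex_of_def)
  obtain x0 where W: "W = {y. breach \<Sigma> x0 y}" using assms(6) by (auto simp: components_def)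
  have x0W: "x0 \<in> W" unfolding W by (simp add: breach_def)
  obtain e1 v1 where ev1: "(e1, v1) \<in> \<Sigma>" "x0 = Inl e1 \<or> x0 = Inr v1"
    using noiso[OF conn assms(3) z] by blast
  have adj1: "badj \<Sigma> (Inl e1) (Inr v1)" using ev1(1) by (auto simp: badj_def)
  have inW1: "Inl e1 \<in> W \<and> Inr v1 \<in> W"
    using ev1(2) breach_step[of \<Sigma> x0, OF _ adj1] breach_step[of \<Sigma> x0, OF _ badj_sym[OF adj1]]
    unfolding W by (auto simp: breach_def)
  define base where "base u = (case u of Inl _ \<Rightarrow> Inl e1 | Inr _ \<Rightarrow> Inr v1)" for u :: "'e + 'v"
  have bsg: "\<And>u. sg (base u) = sg u" by (case_tac u) (simp_all add: base_def sg_def)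
  have bW: "\<And>u. base u \<in> W" using inW1 by (case_tac u) (simp_all add: base_def)
  have bInl: "\<And>u. base u \<in> range Inl \<longleftrightarrow> u \<in> range Inl" by (case_tac u) (auto simp: base_def)
  define d where "d = dvec W base"
  obtain \<mu> where \<mu>: "\<forall>a\<in>\<Sigma>. 0 \<le> \<mu> a" "sum \<mu> \<Sigma> = 1" "z = (\<Sum>a\<in>\<Sigma>. \<mu> a *\<^sub>R rpt a)"
    using z(1) simplex_explicit by blast
  define n where "n = real (card \<Sigma>)"
  have npos: "n > 0" using \<Sigma>ne by (simp add: n_def card_gt_0_iff)
  define w where "w a = \<mu> a / 2 + 1 / (2 * n)" for a
  define p where "p = (\<Sum>a\<in>\<Sigma>. w a *\<^sub>R rpt a)"
  have wge: "\<And>a. a \<in> \<Sigma> \<Longrightarrow> w a \<ge> 1 / (2 * n)" using \<mu>(1) by (simp add: w_def)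
  have wpos: "\<And>a. a \<in> \<Sigma> \<Longrightarrow> w a > 0" using wge npos
    by (meson divide_pos_pos order_less_le_trans mult_pos_pos zero_less_numeral zero_less_one)
  have wsum: "sum w \<Sigma> = 1"
    using \<mu>(2) npos \<Sigma>ne by (simp add: w_def sum.distrib sum_divide_distrib[symmetric] n_def)
  define b where "b = (\<Sum>a\<in>\<Sigma>. (1 / n) *\<^sub>R rpt a)"
  have bS: "b \<in> simplex_of \<Sigma>" unfolding simplex_explicit b_def
    using npos by (intro exI[of _ "\<lambda>_. 1 / n"]) (auto simp: n_def)
  have pS: "p \<in> simplex_of \<Sigma>" unfolding simplex_explicit p_def
    using wpos wsum by (intro exI[of _ w]) (auto intro: less_imp_le)
  have peq: "p = b - (1/2) *\<^sub>R (b - z)"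
  proof -
    have "p = (1/2) *\<^sub>R z + (1/2) *\<^sub>R b"
      by (simp add: p_def w_def \<mu>(3) b_def scaleR_add_left sum.distrib scaleR_sum_right)
    then have h: "\<And>i. p $ i = z $ i / 2 + b $ i / 2" by simp
    show ?thesis unfolding vec_eq_iff
    proof
      fix i
      have "(b - (1/2) *\<^sub>R (b - z)) $ i = b $ i - (b $ i - z $ i) / 2" by simp
      show "p $ i = (b - (1/2) *\<^sub>R (b - z)) $ i" by (simp add: h[of i] field_simps)
    qed
  qed
  have pQ: "p \<in> rel_interior (root_polytope G)" unfolding peq root_polytope_def
    by (rule rel_interior_closure_convex_shrink)
       (use z(2) bS sQ in \<open>auto simp: root_polytope_def intro: closure_subset[THEN subsetD]\<close>)
  have pUNIV: "wK UNIV \<bullet> p = 0" by (simp add: p_def wK_sum wK_UNIV_rpt)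
  have pInl: "wK (range Inl) \<bullet> p = 1" by (simp add: p_def wK_sum wKl_rpt wsum)
  define q where "q t = p + t *\<^sub>R d" for t
  have qUNIV: "\<And>t. wK UNIV \<bullet> q t = 0"
    by (simp add: q_def inner_add_right pUNIV d_def dvec_UNIV[OF bsg])
  have qInl: "\<And>t. wK (range Inl) \<bullet> q t = 1"
    by (simp add: q_def inner_add_right pInl d_def dvec_Inl[OF bsg bInl])
  obtain r1 where r1: "r1 > 0" "ball p r1 \<inter> affine hull root_polytope G \<subseteq> root_polytope G"
    using pQ mem_rel_interior_ball by blast
  define U where "U = (\<Union>\<Gamma>\<in>{\<Gamma>\<in>\<T>. p \<notin> simplex_of \<Gamma>}. simplex_of \<Gamma>)"
  have "closed U" unfolding U_def
    using finT by (intro closed_UN) (auto simp: simplex_of_def intro!: compact_imp_closed finite_imp_compact_convex_hull)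
  moreover have "p \<notin> U" unfolding U_def by blast
  ultimately obtain r2 where r2: "r2 > 0" "ball p r2 \<subseteq> -U"
    using open_contains_ball[of "-U"] by (auto simp: open_Compl)
  define N where "N = real CARD('e + 'v)"
  have Nge: "N \<ge> 0" by (simp add: N_def)
  define t where "t = min (min r1 r2 / (2 * (norm d + 1))) (1 / (2 * n) / (2 * (N + 1)))"
  have nd: "0 < 2 * (norm d + 1)" by (intro mult_pos_pos add_nonneg_pos) simp_all
  have t1: "0 < min r1 r2 / (2 * (norm d + 1))"
    by (intro divide_pos_pos nd) (simp add: r1(1) r2(1))
  have t2: "0 < 1 / (2 * n) / (2 * (N + 1))"
    by (intro divide_pos_pos) (use npos Nge in auto)
  have tpos: "t > 0" unfolding t_def using t1 t2 by simp
  have tnorm: "t * norm d < min r1 r2"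
  proof -
    have "t * norm d \<le> min r1 r2 / (2 * (norm d + 1)) * norm d"
      unfolding t_def by (intro mult_right_mono) auto
    also have "\<dots> < min r1 r2" using aux_lt[of "min r1 r2" "norm d"] r1(1) r2(1) by simp
    finally show ?thesis .
  qed
  have tN: "t * N < 1 / (2 * n)"
  proof -
    have "t * N \<le> 1 / (2 * n) / (2 * (N + 1)) * N"
      unfolding t_def using Nge by (intro mult_right_mono) auto
    also have "\<dots> < 1 / (2 * n)" using npos Nge
      by (intro aux_lt) auto
    finally show ?thesis .
  qed
  have qball: "q t \<in> ball p r1" "q t \<in> ball p r2"
    using tnorm tpos by (auto simp: q_def dist_norm)
  have Lp: "wK (side \<Gamma> e v) \<bullet> p = (if (e, v) \<in> \<Sigma> then w (e, v) else 0)"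
    if "cycle_free \<Gamma>" "(e, v) \<in> \<Gamma>" "\<Sigma> \<subseteq> \<Gamma>" for \<Gamma> e v
    unfolding p_def using coeff_side[OF that(1,2,3)] by simp
  have Lq: "wK K \<bullet> q t = wK K \<bullet> p + t * (wK K \<bullet> d)" for K
    by (simp add: q_def inner_add_right)
  have qaff: "q t \<in> affine hull root_polytope G"
  proof -
    obtain c where c: "q t = (\<Sum>a\<in>G. c a *\<^sub>R rpt a)" using span_repr[OF conn qUNIV] by blast
    have sc: "sum c G = 1" using qInl[of t] unfolding c wK_sum by (simp add: wKl_rpt)
    have inj: "inj_on rpt G" by (rule inj_on_subset[OF rpt_inj]) simp
    let ?u = "\<lambda>x. c (inv_into G rpt x)"
    have "sum ?u (rpt ` G) = 1" using sc inj by (simp add: sum.reindex)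
    moreover have "(\<Sum>x\<in>rpt ` G. ?u x *\<^sub>R x) = q t" using c inj by (simp add: sum.reindex)
    ultimately show ?thesis unfolding root_polytope_def affine_hull_convex_hull
      by (subst affine_hull_finite) auto
  qed
  have qQ: "q t \<in> root_polytope G" using r1(2) qball(1) qaff by blast
  then obtain \<Gamma> where \<Gamma>: "\<Gamma> \<in> \<T>" "q t \<in> simplex_of \<Gamma>" using cover by blast
  have p\<Gamma>: "p \<in> simplex_of \<Gamma>"
  proof (rule ccontr)
    assume "p \<notin> simplex_of \<Gamma>"
    then have "q t \<in> U" unfolding U_def using \<Gamma> by blast
    then show False using r2(2) qball(2) by blast
  qed
  have S0: "simplex_of \<Sigma> \<subseteq> simplex_of \<Gamma>0" using \<Gamma>0(2) by (rule face_of_imp_subset)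
  have \<Sigma>\<Gamma>: "\<Sigma> \<subseteq> \<Gamma>"
  proof
    fix a assume a: "a \<in> \<Sigma>"
    have F: "(simplex_of \<Gamma>0 \<inter> simplex_of \<Gamma>) face_of simplex_of \<Gamma>0" using faces \<Gamma>0(1) \<Gamma>(1) .
    have "rpt i \<in> simplex_of \<Gamma>0" if "i \<in> \<Sigma>" for i
      using S0 that unfolding simplex_of_def by (auto intro: hull_inc)
    moreover have "p \<in> simplex_of \<Gamma>0 \<inter> simplex_of \<Gamma>" using pS S0 p\<Gamma> by blast
    ultimately have "rpt a \<in> simplex_of \<Gamma>0 \<inter> simplex_of \<Gamma>"
      using face_pos_comb[OF F _ _ _ wpos wsum _ a, of rpt] unfolding p_def
      by (auto simp: simplex_of_def)
    then show "a \<in> \<Gamma>" using vertex_in by blast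
  qed
  have exist: "\<Gamma> \<in> \<T> \<and> \<Sigma> \<subseteq> \<Gamma> \<and> (\<forall>e v. (e, v) \<in> \<Gamma> - \<Sigma> \<longrightarrow> violet_faces \<Gamma> W e v)"
  proof (intro conjI allI impI)
    fix e v assume ev: "(e, v) \<in> \<Gamma> - \<Sigma>"
    have cf: "cycle_free \<Gamma>" and cn: "bconnected \<Gamma>" using trees[OF \<Gamma>(1)] by (auto simp: spanning_tree_def)
    let ?A = "side \<Gamma> e v"
    have disj: "W \<inter> ?A = {}"
    proof (rule ccontr)
      assume "W \<inter> ?A \<noteq> {}"
      then obtain y where "y \<in> W" "y \<in> ?A" by blast
      have evG: "(e, v) \<in> \<Gamma>" "(e, v) \<notin> \<Sigma>" using ev by auto
      have SG: "\<Sigma> \<subseteq> \<Gamma> - {(e, v)}" using \<Sigma>\<Gamma> evG(2) by blast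
      have WA: "W \<subseteq> ?A" by (rule comp_side[OF SG \<open>y \<in> W\<close> \<open>y \<in> ?A\<close> W])
      obtain \<mu>' where m': "\<forall>a\<in>\<Gamma>. 0 \<le> \<mu>' a" "q t = (\<Sum>a\<in>\<Gamma>. \<mu>' a *\<^sub>R rpt a)"
        using \<Gamma>(2) simplex_explicit by blast
      have "wK ?A \<bullet> (\<Sum>a\<in>\<Gamma>. \<mu>' a *\<^sub>R rpt a) = \<mu>' (e, v)"
        using coeff_side[OF cf evG(1) order_refl finite] evG(1) by simp
      then have "wK ?A \<bullet> q t \<ge> 0" using m' evG(1) by simp
      moreover have nA: "Inr v \<notin> ?A" by (rule side_r[OF cf evG(1)])
      have "wK ?A \<bullet> d \<le> -1" unfolding d_def by (rule dvec_neg[OF bsg bW WA nA])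
      moreover have "wK ?A \<bullet> p = 0" using Lp[OF cf evG(1) \<Sigma>\<Gamma>] evG(2) by simp
      moreover have "t * (wK ?A \<bullet> d) < 0"
        using tpos \<open>wK ?A \<bullet> d \<le> -1\<close> by (intro mult_pos_neg) linarith+
      ultimately show False using Lq[of ?A] by linarith
    qed
    show "violet_faces \<Gamma> W e v" unfolding violet_faces_def
    proof (rule gdist_less[OF cn, where K = "-?A"])
      fix x y assume "badj \<Gamma> x y" "x \<notin> - ?A" "y \<in> - ?A"
      then show "y = Inr v" using side_cross2[of \<Gamma> x y e v] by simp
    next
      show "Inl e \<notin> - ?A" by (simp add: side_l)
      show "W \<subseteq> - ?A" using disj by blast
    qed (rule x0W)
  qed (use \<Gamma> \<Sigma>\<Gamma> in auto)
  have pos: "\<exists>c. (\<forall>a\<in>\<Gamma>'. c a > 0) \<and> sum c \<Gamma>' = 1 \<and> q t = (\<Sum>a\<in>\<Gamma>'. c a *\<^sub>R rpt a)"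
    if V: "\<Gamma>' \<in> \<T>" "\<Sigma> \<subseteq> \<Gamma>'" "\<forall>e v. (e, v) \<in> \<Gamma>' - \<Sigma> \<longrightarrow> violet_faces \<Gamma>' W e v" for \<Gamma>'
  proof -
    have cf: "cycle_free \<Gamma>'" and cn: "bconnected \<Gamma>'" using trees[OF V(1)] by (auto simp: spanning_tree_def)
    obtain c where c: "q t = (\<Sum>a\<in>\<Gamma>'. c a *\<^sub>R rpt a)" using span_repr[OF cn qUNIV] by blast
    have sc: "sum c \<Gamma>' = 1" using qInl[of t] unfolding c wK_sum by (simp add: wKl_rpt)
    have "c a > 0" if a: "a \<in> \<Gamma>'" for a
    proof -
      obtain e v where ae: "a = (e, v)" by (cases a)
      let ?A = "side \<Gamma>' e v"
      have aG: "(e, v) \<in> \<Gamma>'" using a ae by simp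
      have ca: "c a = wK ?A \<bullet> q t"
        using coeff_side[OF cf aG order_refl finite, of c] aG ae c by simp
      show ?thesis
      proof (cases "a \<in> \<Sigma>")
        case True
        have "\<bar>wK ?A \<bullet> d\<bar> \<le> N" unfolding d_def N_def by (rule dvec_bound[OF bsg])
        then have "\<bar>t * (wK ?A \<bullet> d)\<bar> \<le> t * N" using tpos by (simp add: abs_mult)
        then have "\<bar>t * (wK ?A \<bullet> d)\<bar> < w a" using tN wge[OF True] by linarith
        moreover have "wK ?A \<bullet> p = w a" using Lp[OF cf aG V(2)] ae True by simp
        ultimately show ?thesis using ca Lq[of ?A] by linarith
      next
        case False
        have vf: "violet_faces \<Gamma>' W e v" using V(3) a ae False by blast
        have disj: "W \<inter> ?A = {}"
        proof (rule ccontr)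
          assume "W \<inter> ?A \<noteq> {}"
          then obtain y where "y \<in> W" "y \<in> ?A" by blast
          have SG: "\<Sigma> \<subseteq> \<Gamma>' - {(e, v)}" using V(2) False ae by blast
          have WA: "W \<subseteq> ?A" by (rule comp_side[OF SG \<open>y \<in> W\<close> \<open>y \<in> ?A\<close> W])
          have "gdist \<Gamma>' (Inl e) W < gdist \<Gamma>' (Inr v) W"
          proof (rule gdist_less[OF cn, where K = "?A"])
            fix x y assume "badj \<Gamma>' x y" "x \<notin> ?A" "y \<in> ?A"
            then show "y = Inl e" using side_cross[of \<Gamma>' x y e v] by simp
          next
            show "Inr v \<notin> ?A" by (rule side_r[OF cf aG])
          qed (rule WA, rule x0W)
          then show False using vf unfolding violet_faces_def by simp
        qed
        have disj': "?A \<inter> W = {}" using disj by blast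
        have "wK ?A \<bullet> d \<ge> 1" unfolding d_def by (rule dvec_pos[OF bsg bW disj' side_l])
        moreover have "wK ?A \<bullet> p = 0" using Lp[OF cf aG V(2)] ae False by simp
        moreover have "t * (wK ?A \<bullet> d) > 0"
          using tpos \<open>wK ?A \<bullet> d \<ge> 1\<close> by (intro mult_pos_pos) linarith+
        ultimately show ?thesis using ca Lq[of ?A] by linarith
      qed
    qed
    then show ?thesis using sc c by blast
  qed
  have sub: "\<Gamma>1 \<subseteq> \<Gamma>2"
    if V1: "\<Gamma>1 \<in> \<T>" "\<Sigma> \<subseteq> \<Gamma>1" "\<forall>e v. (e, v) \<in> \<Gamma>1 - \<Sigma> \<longrightarrow> violet_faces \<Gamma>1 W e v"
    and V2: "\<Gamma>2 \<in> \<T>" "\<Sigma> \<subseteq> \<Gamma>2" "\<forall>e v. (e, v) \<in> \<Gamma>2 - \<Sigma> \<longrightarrow> violet_faces \<Gamma>2 W e v" for \<Gamma>1 \<Gamma>2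
  proof
    fix a assume a: "a \<in> \<Gamma>1"
    obtain c1 where c1: "\<forall>a\<in>\<Gamma>1. c1 a > 0" "sum c1 \<Gamma>1 = 1" "q t = (\<Sum>a\<in>\<Gamma>1. c1 a *\<^sub>R rpt a)"
      using pos[OF V1] by blast
    obtain c2 where c2: "\<forall>a\<in>\<Gamma>2. c2 a > 0" "sum c2 \<Gamma>2 = 1" "q t = (\<Sum>a\<in>\<Gamma>2. c2 a *\<^sub>R rpt a)"
      using pos[OF V2] by blast
    have q2: "q t \<in> simplex_of \<Gamma>2" unfolding simplex_explicit using c2
      by (intro exI[of _ c2]) (auto intro: less_imp_le)
    have q1: "q t \<in> simplex_of \<Gamma>1" unfolding simplex_explicit using c1
      by (intro exI[of _ c1]) (auto intro: less_imp_le)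
    have F: "(simplex_of \<Gamma>1 \<inter> simplex_of \<Gamma>2) face_of simplex_of \<Gamma>1" using faces V1(1) V2(1) .
    have "rpt a \<in> simplex_of \<Gamma>1 \<inter> simplex_of \<Gamma>2"
      using face_pos_comb[OF F _ _ _ _ c1(2) _ a, of rpt] c1 q1 q2
      by (auto simp: simplex_of_def intro: hull_inc)
    then show "a \<in> \<Gamma>2" using vertex_in by blast
  qed
  have g: "\<Gamma> \<in> \<T>" "\<Sigma> \<subseteq> \<Gamma>" "\<forall>e v. (e, v) \<in> \<Gamma> - \<Sigma> \<longrightarrow> violet_faces \<Gamma> W e v"
    using exist by auto
  show ?thesis
  proof (rule ex1I[of _ \<Gamma>])
    show "\<Gamma> \<in> \<T> \<and> \<Sigma> \<subseteq> \<Gamma> \<and> (\<forall>e v. (e, v) \<in> \<Gamma> - \<Sigma> \<longrightarrow> violet_faces \<Gamma> W e v)"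
      by (rule exist)
  next
    fix \<Gamma>' assume h: "\<Gamma>' \<in> \<T> \<and> \<Sigma> \<subseteq> \<Gamma>' \<and> (\<forall>e v. (e, v) \<in> \<Gamma>' - \<Sigma> \<longrightarrow> violet_faces \<Gamma>' W e v)"
    then have h1: "\<Gamma>' \<in> \<T>" "\<Sigma> \<subseteq> \<Gamma>'" "\<forall>e v. (e, v) \<in> \<Gamma>' - \<Sigma> \<longrightarrow> violet_faces \<Gamma>' W e v"
      by auto
    show "\<Gamma>' = \<Gamma>" using sub[OF h1 g] sub[OF g h1] by (rule subset_antisym)
  qed
qed

end
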